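(* In the two-tier residency matching game described in the context with any list length $K\ge 1$ and $v\ge e/(e-1)$, under the large market approximation, the social welfare of the symmetric Nash equilibrium is at least half of the OPTIMUM welfare $2(v+r)n$; i.e., the loss of efficiency of equilibrium compared to OPTIMUM is at most a factor of $2$.
   Context: Model: there are $n$ high-tier and $rn$ low-tier doctors ($r>0$), and $n$ high-tier and $rn$ low-tier hospitals, each with one position. Every hospital prefers every high doctor to every low doctor and every doctor prefers every high hospital to every low hospital; within a tier, preferences are independent uniformly random permutations. Each doctor submits a ranked list of exactly $K$ hospitals: a strategy $(k,K-k)$ lists his $k$ most preferred high hospitals followed by his $K-k$ most preferred low hospitals. Hospitals submit full true rankings; doctor-proposing deferred acceptance is run. Values: a doctor gets $v>1$ if matched to a high hospital, $1$ if matched to a low one, $0$ if unmatched; a hospital gets $v$ if matched to a high doctor, $1$ if matched to a low doctor, $0$ if unfilled. Social welfare is the sum of the values of all doctors and hospitals. Large market approximation: $n\to\infty$ with $r,K,v$ fixed, and each application to a hospital is accepted independently with a probability determined by the aggregate strategy profile through fixed-point equations (expected matched doctors = expected hospitals receiving at least one admissible application; a hospital receiving on average $\lambda$ applications gets none with probability $e^{-\lambda}$; low doctors' applications to hospitals already taken by high doctors are rejected). Equilibrium: symmetric Nash equilibrium, all doctors of a tier using the same (possibly mixed) strategy, each maximizing expected value given the acceptance probabilities. OPTIMUM: the welfare $2(v+r)n$ of the matching in which every high doctor is matched to a high hospital and every low doctor to a low hospital (the deferred acceptance outcome with full lists). *)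

theory Defs
  imports Complex_Main
begin

text \<open>
Strategy k (0 \<le> k \<le> K) means: list the k most preferred high hospitals,
then the K-k most preferred low hospitals.  A mixed strategy of a tier is a
probability vector x over {0..K}; x k = fraction of doctors of that tier using (k,K-k).
Acceptance probabilities:
  p1: high doctor at high hospital,  p2: high doctor at low hospital,
  p3: low doctor at high hospital,   p4: low doctor at low hospital.
All quantities are normalised by n (n high doctors/hospitals, r n low ones).
\<close>

definition mixed_strategy :: "nat \<Rightarrow> (nat \<Rightarrow> real) \<Rightarrow> bool" where
  "mixed_strategy K x \<longleftrightarrow> (\<forall>k. 0 \<le> x k) \<and> (\<Sum>k\<le>K. x k) = 1"

text \<open>Expected number (per doctor of the tier) of matches / applications in the
first (high) phase and second (low) phase of the list.\<close>

definition first_match :: "nat \<Rightarrow> (nat \<Rightarrow> real) \<Rightarrow> real \<Rightarrow> real" where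
  "first_match K x p = (\<Sum>k\<le>K. x k * (1 - (1 - p) ^ k))"

definition first_apps :: "nat \<Rightarrow> (nat \<Rightarrow> real) \<Rightarrow> real \<Rightarrow> real" where
  "first_apps K x p = (\<Sum>k\<le>K. x k * (\<Sum>j<k. (1 - p) ^ j))"

definition second_match :: "nat \<Rightarrow> (nat \<Rightarrow> real) \<Rightarrow> real \<Rightarrow> real \<Rightarrow> real" where
  "second_match K x p q = (\<Sum>k\<le>K. x k * (1 - p) ^ k * (1 - (1 - q) ^ (K - k)))"

definition second_apps :: "nat \<Rightarrow> (nat \<Rightarrow> real) \<Rightarrow> real \<Rightarrow> real \<Rightarrow> real" where
  "second_apps K x p q = (\<Sum>k\<le>K. x k * (1 - p) ^ k * (\<Sum>j<K - k. (1 - q) ^ j))"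

text \<open>Average numbers of applications per hospital:
  lam1: high doctors to each high hospital, lam2: high doctors to each low hospital,
  lam3: low doctors to each high hospital,  lam4: low doctors to each low hospital.\<close>

definition lam1 :: "nat \<Rightarrow> (nat \<Rightarrow> real) \<Rightarrow> real \<Rightarrow> real" where
  "lam1 K x p1 = first_apps K x p1"

definition lam2 :: "nat \<Rightarrow> real \<Rightarrow> (nat \<Rightarrow> real) \<Rightarrow> real \<Rightarrow> real \<Rightarrow> real" where
  "lam2 K r x p1 p2 = second_apps K x p1 p2 / r"

definition lam3 :: "nat \<Rightarrow> real \<Rightarrow> (nat \<Rightarrow> real) \<Rightarrow> real \<Rightarrow> real" where
  "lam3 K r y p3 = r * first_apps K y p3"

definition lam4 :: "nat \<Rightarrow> (nat \<Rightarrow> real) \<Rightarrow> real \<Rightarrow> real \<Rightarrow> real" where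
  "lam4 K y p3 p4 = second_apps K y p3 p4"

text \<open>Fixed-point equations: expected matched doctors = expected hospitals receiving
at least one admissible application.  When no applications at all reach a class of
hospitals (lam = 0) the equation is vacuous and the acceptance probability is the
limiting value (an application is accepted iff the hospital is admissible).\<close>

definition fixed_point ::
  "nat \<Rightarrow> real \<Rightarrow> (nat \<Rightarrow> real) \<Rightarrow> (nat \<Rightarrow> real) \<Rightarrow> real \<Rightarrow> real \<Rightarrow> real \<Rightarrow> real \<Rightarrow> bool" where
  "fixed_point K r x y p1 p2 p3 p4 \<longleftrightarrow>
     p1 \<in> {0..1} \<and> p2 \<in> {0..1} \<and> p3 \<in> {0..1} \<and> p4 \<in> {0..1} \<and>
     first_match K x p1 = 1 - exp (- lam1 K x p1) \<and>
     (lam1 K x p1 = 0 \<longrightarrow> p1 = 1) \<and>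
     second_match K x p1 p2 = r * (1 - exp (- lam2 K r x p1 p2)) \<and>
     (lam2 K r x p1 p2 = 0 \<longrightarrow> p2 = 1) \<and>
     r * first_match K y p3 = exp (- lam1 K x p1) * (1 - exp (- lam3 K r y p3)) \<and>
     (lam3 K r y p3 = 0 \<longrightarrow> p3 = exp (- lam1 K x p1)) \<and>
     second_match K y p3 p4 = exp (- lam2 K r x p1 p2) * (1 - exp (- lam4 K y p3 p4)) \<and>
     (lam4 K y p3 p4 = 0 \<longrightarrow> p4 = exp (- lam2 K r x p1 p2))"

definition doctor_value :: "real \<Rightarrow> nat \<Rightarrow> real \<Rightarrow> real \<Rightarrow> nat \<Rightarrow> real" where
  "doctor_value v K p q k = v * (1 - (1 - p) ^ k) + (1 - p) ^ k * (1 - (1 - q) ^ (K - k))"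

definition symmetric_NE ::
  "nat \<Rightarrow> real \<Rightarrow> real \<Rightarrow> (nat \<Rightarrow> real) \<Rightarrow> (nat \<Rightarrow> real) \<Rightarrow> real \<Rightarrow> real \<Rightarrow> real \<Rightarrow> real \<Rightarrow> bool" where
  "symmetric_NE K r v x y p1 p2 p3 p4 \<longleftrightarrow>
     mixed_strategy K x \<and> mixed_strategy K y \<and>
     fixed_point K r x y p1 p2 p3 p4 \<and>
     (\<forall>k\<le>K. 0 < x k \<longrightarrow> (\<forall>k'\<le>K. doctor_value v K p1 p2 k' \<le> doctor_value v K p1 p2 k)) \<and>
     (\<forall>k\<le>K. 0 < y k \<longrightarrow> (\<forall>k'\<le>K. doctor_value v K p3 p4 k' \<le> doctor_value v K p3 p4 k))"

definition welfare ::
  "nat \<Rightarrow> real \<Rightarrow> real \<Rightarrow> (nat \<Rightarrow> real) \<Rightarrow> (nat \<Rightarrow> real) \<Rightarrow> real \<Rightarrow> real \<Rightarrow> real \<Rightarrow> real \<Rightarrow> real" where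
  "welfare K r v x y p1 p2 p3 p4 =
     (\<Sum>k\<le>K. x k * doctor_value v K p1 p2 k)
   + r * (\<Sum>k\<le>K. y k * doctor_value v K p3 p4 k)
   + (v * (1 - exp (- lam1 K x p1))
      + exp (- lam1 K x p1) * (1 - exp (- lam3 K r y p3)))
   + r * (v * (1 - exp (- lam2 K r x p1 p2))
      + exp (- lam2 K r x p1 p2) * (1 - exp (- lam4 K y p3 p4)))"

definition optimum :: "real \<Rightarrow> real \<Rightarrow> real" where
  "optimum r v = 2 * (v + r)"

end

theory Submission
  imports Defs
begin

lemma fm_eq: "first_match K x p = p * first_apps K x p"
proof -
  have e: "1 - (1 - p) ^ k = p * (\<Sum>j<k. (1 - p) ^ j)" for k
    using one_diff_power_eq[of "1 - p" k] by simp
  have "x k * (1 - (1 - p) ^ k) = p * (x k * (\<Sum>j<k. (1 - p) ^ j))" for k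
    unfolding e by (simp only: mult.left_commute)
  then show ?thesis
    unfolding first_match_def first_apps_def sum_distrib_left by simp
qed

lemma sm_eq: "second_match K x p q = q * second_apps K x p q"
proof -
  have e: "1 - (1 - q) ^ (K - k) = q * (\<Sum>j<K - k. (1 - q) ^ j)" for k
    using one_diff_power_eq[of "1 - q" "K - k"] by simp
  have "x k * (1 - p) ^ k * (1 - (1 - q) ^ (K - k)) = q * (x k * (1 - p) ^ k * (\<Sum>j<K - k. (1 - q) ^ j))" for k
    unfolding e by (simp only: mult.left_commute)
  then show ?thesis
    unfolding second_match_def second_apps_def sum_distrib_left by simp
qed

lemma fa_nonneg:
  assumes "mixed_strategy K x" "p \<in> {0..1}"
  shows "first_apps K x p \<ge> 0"
  using assms unfolding first_apps_def mixed_strategy_def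
  by (intro sum_nonneg mult_nonneg_nonneg) auto

lemma sa_nonneg:
  assumes "mixed_strategy K x" "p \<in> {0..1}" "q \<in> {0..1}"
  shows "second_apps K x p q \<ge> 0"
  using assms unfolding second_apps_def mixed_strategy_def
  by (intro sum_nonneg mult_nonneg_nonneg) auto

lemma key:
  fixes p t c :: real
  assumes "t \<ge> 0" "c \<ge> 0" "p * t = c * (1 - exp (- t))" "t = 0 \<longrightarrow> p = c"
  shows "p \<ge> c * exp (- t)"
proof (cases "t = 0")
  case True then show ?thesis using assms by simp
next
  case False
  then have tp: "t > 0" using assms by simp
  have "1 + t \<le> exp t" by (rule exp_ge_add_one_self)
  then have "t * exp (- t) \<le> 1 - exp (- t)"
    by (simp add: exp_minus field_simps)
  then have "c * (t * exp (- t)) \<le> c * (1 - exp (- t))"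
    using assms(2) by (rule mult_left_mono)
  then have "t * (c * exp (- t)) \<le> t * p" using assms(3) by (simp add: algebra_simps)
  then show ?thesis using tp by simp
qed

lemma br_sum:
  assumes "mixed_strategy K x"
    and "\<forall>k\<le>K. 0 < x k \<longrightarrow> (\<forall>k'\<le>K. f k' \<le> f k)"
    and "k0 \<le> K"
  shows "(\<Sum>k\<le>K. x k * f k) \<ge> f k0"
proof -
  have "(\<Sum>k\<le>K. x k * f k0) \<le> (\<Sum>k\<le>K. x k * f k)"
  proof (rule sum_mono)
    fix k assume "k \<in> {..K}"
    then show "x k * f k0 \<le> x k * f k"
      using assms unfolding mixed_strategy_def
    proof (cases "x k = 0")
      case False
      with assms \<open>k \<in> {..K}\<close> have "0 < x k" "f k0 \<le> f k"
        unfolding mixed_strategy_def by (auto simp: less_le)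
      then show ?thesis by (intro mult_left_mono) auto
    qed simp
  qed
  moreover have "(\<Sum>k\<le>K. x k * f k0) = f k0"
    using assms(1) unfolding mixed_strategy_def by (simp add: sum_distrib_right[symmetric])
  ultimately show ?thesis by simp
qed

lemma pow_bound:
  fixes p :: real
  assumes "K \<ge> 1" "p \<in> {0..1}"
  shows "1 - (1 - p) ^ K \<ge> p"
proof -
  have "(1 - p) ^ K \<le> (1 - p) ^ 1"
    using assms by (intro power_decreasing) auto
  then show ?thesis by simp
qed

theorem theorem2:
  fixes K :: nat and r v p1 p2 p3 p4 :: real and x y :: "nat \<Rightarrow> real"
  assumes "K \<ge> 1" and "r > 0" and "v > 1" and "v \<ge> exp 1 / (exp 1 - 1)"
    and "symmetric_NE K r v x y p1 p2 p3 p4"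
  shows "welfare K r v x y p1 p2 p3 p4 \<ge> optimum r v / 2"
proof -
  note ne = assms(5)[unfolded symmetric_NE_def]
  have mx: "mixed_strategy K x" and my: "mixed_strategy K y" using ne by auto
  have fp: "fixed_point K r x y p1 p2 p3 p4" using ne by auto
  note f = fp[unfolded fixed_point_def]
  define l1 where "l1 = lam1 K x p1"
  define l2 where "l2 = lam2 K r x p1 p2"
  define l3 where "l3 = lam3 K r y p3"
  define l4 where "l4 = lam4 K y p3 p4"
  have p1r: "p1 \<in> {0..1}" and p2r: "p2 \<in> {0..1}" and p3r: "p3 \<in> {0..1}" and p4r: "p4 \<in> {0..1}"
    using f by auto
  have l1n: "l1 \<ge> 0" unfolding l1_def lam1_def using fa_nonneg[OF mx p1r] .
  have l2n: "l2 \<ge> 0" unfolding l2_def lam2_def using sa_nonneg[OF mx p1r p2r] assms(2) by simp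
  have l3n: "l3 \<ge> 0" unfolding l3_def lam3_def using fa_nonneg[OF my p3r] assms(2) by simp
  have l4n: "l4 \<ge> 0" unfolding l4_def lam4_def using sa_nonneg[OF my p3r p4r] .
  have h1: "p1 \<ge> 1 * exp (- l1)"
  proof (rule key[OF l1n])
    show "p1 * l1 = 1 * (1 - exp (- l1))" using f fm_eq[of K x p1] unfolding l1_def lam1_def by simp
    show "l1 = 0 \<longrightarrow> p1 = 1" using f unfolding l1_def by simp
  qed simp
  have h4: "p4 \<ge> exp (- l2) * exp (- l4)"
  proof (rule key[OF l4n])
    show "p4 * l4 = exp (- l2) * (1 - exp (- l4))"
      using f sm_eq[of K y p3 p4] unfolding l4_def lam4_def l2_def by simp
    show "l4 = 0 \<longrightarrow> p4 = exp (- l2)" using f unfolding l4_def l2_def by simp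
  qed simp
  have dH: "(\<Sum>k\<le>K. x k * doctor_value v K p1 p2 k) \<ge> doctor_value v K p1 p2 K"
    using br_sum[OF mx, of "doctor_value v K p1 p2" K] ne by auto
  have dHK: "doctor_value v K p1 p2 K \<ge> v * p1"
    unfolding doctor_value_def using pow_bound[OF assms(1) p1r] assms(3) by simp
  have dL: "(\<Sum>k\<le>K. y k * doctor_value v K p3 p4 k) \<ge> doctor_value v K p3 p4 0"
    using br_sum[OF my, of "doctor_value v K p3 p4" 0] ne by auto
  have dL0: "doctor_value v K p3 p4 0 \<ge> p4"
    unfolding doctor_value_def using pow_bound[OF assms(1) p4r] by simp
  have e3: "exp (- l3) \<le> 1" using l3n by simp
  have e2: "exp (- l2) \<le> 1" using l2n by simp
  have hosH: "v * (1 - exp (- l1)) + exp (- l1) * (1 - exp (- l3)) \<ge> v * (1 - exp (- l1))"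
    using e3 by (simp add: mult_nonneg_nonneg)
  have hosL: "v * (1 - exp (- l2)) + exp (- l2) * (1 - exp (- l4)) \<ge> 1 - exp (- l2) * exp (- l4)"
  proof -
    have "v * (1 - exp (- l2)) \<ge> 1 * (1 - exp (- l2))"
      using e2 assms(3) by (intro mult_right_mono) auto
    then show ?thesis by (simp add: algebra_simps)
  qed
  have W: "welfare K r v x y p1 p2 p3 p4 \<ge> v * p1 + r * p4 + v * (1 - exp (- l1))
            + r * (1 - exp (- l2) * exp (- l4))"
  proof -
    have a: "r * (\<Sum>k\<le>K. y k * doctor_value v K p3 p4 k) \<ge> r * p4"
      using dL dL0 assms(2) by (intro mult_left_mono) auto
    have b: "r * (v * (1 - exp (- l2)) + exp (- l2) * (1 - exp (- l4))) \<ge> r * (1 - exp (- l2) * exp (- l4))"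
      using hosL assms(2) by (intro mult_left_mono) auto
    show ?thesis unfolding welfare_def l1_def[symmetric] l2_def[symmetric] l3_def[symmetric] l4_def[symmetric]
      using dH dHK a b hosH by linarith
  qed
  have "v * p1 + v * (1 - exp (- l1)) \<ge> v"
  proof -
    have "v * p1 \<ge> v * exp (- l1)" using h1 assms(3) by simp
    then show ?thesis by (simp add: algebra_simps)
  qed
  moreover have "r * p4 + r * (1 - exp (- l2) * exp (- l4)) \<ge> r"
  proof -
    have "r * p4 \<ge> r * (exp (- l2) * exp (- l4))" using h4 assms(2) by simp
    then show ?thesis by (simp add: algebra_simps)
  qed
  ultimately have "welfare K r v x y p1 p2 p3 p4 \<ge> v + r" using W by linarith
  then show ?thesis unfolding optimum_def by simp
qed

end
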